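(* Let $N\ge2$, $\sigma^*\in\mathbb{R}^d_{>0}$ with $\sigma_1^*=\max_k\sigma_k^*$, and consider the recursion $$\sigma_i(t+1)=\sigma_i(t)\Big(1+\frac{\eta}{N}\sigma_i(t)^{1-\frac2N}(\sigma_i^*-\sigma_i(t))\Big)^N,$$ with $0\le\sigma_i(0)<\sigma_i^*$. If $\eta\le(1/\sigma_1^* )^{2-\frac2N}$, then $\sigma_i(t)\le\sigma_i^*$ for all $t\ge0$.
   Context: This recursion is gradient descent with learning rate $\eta$ on $\ell_N(w)=\frac{1}{2N^2}\|w^N-\sigma^*\|^2$ over nonnegative weights $w$, written in terms of $\sigma_i=w_i^N$. *)

theory Defs
  imports Complex_Main
begin

end

theory Submission
  imports Defs
begin

lemma diffbound:
  fixes w b :: real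
  assumes "0 \<le> w" "w \<le> b"
  shows "b^N - w^N \<le> real N * b^(N-1) * (b - w)"
proof -
  have "b^N - w^N = (b - w) * (\<Sum>i<N. w^(N - Suc i) * b^i)"
    by (rule power_diff_sumr2)
  also have "(\<Sum>i<N. w^(N - Suc i) * b^i) \<le> (\<Sum>i<N. b^(N - 1))"
  proof (rule sum_mono)
    fix i assume "i \<in> {..<N}"
    hence "w^(N - Suc i) * b^i \<le> b^(N - Suc i) * b^i"
      using assms by (intro mult_right_mono power_mono) auto
    also have "\<dots> = b^(N-1)" using \<open>i \<in> {..<N}\<close>
      by (simp add: power_add[symmetric])
    finally show "w^(N - Suc i) * b^i \<le> b^(N-1)" .
  qed
  hence "(b - w) * (\<Sum>i<N. w^(N - Suc i) * b^i) \<le> (b - w) * (\<Sum>i<N. b^(N - 1))"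
    using assms by (intro mult_left_mono) auto
  finally show ?thesis by (simp add: algebra_simps)
qed

lemma key:
  fixes w b c :: real
  assumes N: "N \<ge> 2" and "0 \<le> w" "w \<le> b" "0 \<le> c" and cb: "c * real N * b^(2*N-2) \<le> 1"
  shows "w * (1 + c * w^(N-2) * (b^N - w^N)) \<le> b"
proof -
  have e1: "w * (1 + c * w^(N-2) * (b^N - w^N)) = w + c * w^(N-1) * (b^N - w^N)"
  proof -
    have "w * w^(N-2) = w^(N-1)" using N
      by (metis One_nat_def Suc_diff_Suc diff_Suc_1 le_add_diff_inverse lessI less_le_trans numeral_2_eq_2 power_Suc pos2)
    have "w * (1 + c * w^(N-2) * (b^N - w^N)) = w + c * (w * w^(N-2)) * (b^N - w^N)"
      by (simp add: algebra_simps)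
    thus ?thesis using \<open>w * w^(N-2) = w^(N-1)\<close> by simp
  qed
  have "b^N - w^N \<ge> 0" using assms by (simp add: power_mono)
  have "c * w^(N-1) * (b^N - w^N) \<le> c * b^(N-1) * (real N * b^(N-1) * (b - w))"
    using assms diffbound[OF assms(2,3), of N] \<open>b^N - w^N \<ge> 0\<close>
    by (intro mult_mono mult_left_mono power_mono) auto
  also have "\<dots> = (c * real N * b^(2*N-2)) * (b - w)"
  proof -
    have "(N-1)+(N-1) = 2*N-2" using N by simp
    hence "b^(N-1) * b^(N-1) = b^(2*N-2)" by (metis power_add)
    thus ?thesis by (simp add: algebra_simps)
  qed
  also have "\<dots> \<le> 1 * (b - w)" using cb assms by (intro mult_right_mono) auto
  finally show ?thesis using e1 by simp
qed

lemma step: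
  fixes x a eta :: real
  assumes N: "N \<ge> 2" and x0: "0 \<le> x" and xa: "x \<le> a" and a0: "0 < a" and e0: "0 < eta"
    and ea: "eta * a powr (2 - 2 / real N) \<le> 1"
  shows "0 \<le> x * (1 + eta / real N * x powr (1 - 2 / real N) * (a - x)) ^ N \<and>
         x * (1 + eta / real N * x powr (1 - 2 / real N) * (a - x)) ^ N \<le> a"
proof (cases "x = 0")
  case True thus ?thesis using a0 by simp
next
  case False
  hence xp: "x > 0" using x0 by simp
  have Np: "real N > 0" using N by simp
  define w where "w = x powr (1 / real N)"
  define b where "b = a powr (1 / real N)"
  define c where "c = eta / real N"
  have w0: "0 \<le> w" unfolding w_def by simp
  have wb: "w \<le> b" unfolding w_def b_def using x0 xa by (intro powr_mono2) auto
  have c0: "0 \<le> c" unfolding c_def using e0 by simp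
  have wN: "w^N = x" unfolding w_def using xp Np by (simp add: powr_power powr_powr)
  have bN: "b^N = a" unfolding b_def using a0 Np by (simp add: powr_power powr_powr)
  have rN2: "real (N-2) = real N - 2" using N by simp
  have wN2: "w^(N-2) = x powr (1 - 2 / real N)"
    unfolding w_def using xp Np rN2 by (simp add: powr_power powr_powr field_simps)
  have r2N: "real (2*N-2) = 2 * real N - 2" using N by simp
  have b2N: "b^(2*N-2) = a powr (2 - 2 / real N)"
    unfolding b_def using a0 Np r2N by (simp add: powr_power powr_powr field_simps)
  have cb: "c * real N * b^(2*N-2) \<le> 1" using ea Np unfolding b2N c_def by simp
  have u1: "1 + c * w^(N-2) * (b^N - w^N) \<ge> 1"
    using c0 w0 xa by (simp add: wN bN)
  have K: "w * (1 + c * w^(N-2) * (b^N - w^N)) \<le> b"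
    by (rule key[OF N w0 wb c0 cb])
  have eq: "x * (1 + eta / real N * x powr (1 - 2 / real N) * (a - x)) ^ N
      = (w * (1 + c * w^(N-2) * (b^N - w^N)))^N"
    by (simp add: power_mult_distrib wN bN wN2 c_def)
  have "(w * (1 + c * w^(N-2) * (b^N - w^N)))^N \<le> b^N"
    using K u1 w0 by (intro power_mono) auto
  moreover have "0 \<le> (w * (1 + c * w^(N-2) * (b^N - w^N)))^N"
    using u1 w0 by simp
  ultimately show ?thesis unfolding eq bN by simp
qed

theorem lemma1:
  fixes N d :: nat and eta :: real
    and sstar :: "nat \<Rightarrow> real" and sigma :: "nat \<Rightarrow> nat \<Rightarrow> real"
  assumes N: "N \<ge> 2"
    and d: "d \<ge> 1"
    and pos: "\<forall>i\<in>{1..d}. sstar i > 0"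
    and max1: "sstar 1 = Max (sstar ` {1..d})"
    and init: "\<forall>i\<in>{1..d}. 0 \<le> sigma 0 i \<and> sigma 0 i < sstar i"
    and rec: "\<forall>t. \<forall>i\<in>{1..d}. sigma (Suc t) i =
       sigma t i * (1 + eta / real N * sigma t i powr (1 - 2 / real N) * (sstar i - sigma t i)) ^ N"
    and eta_pos: "eta > 0"
    and eta_le: "eta \<le> (1 / sstar 1) powr (2 - 2 / real N)"
  shows "\<forall>t. \<forall>i\<in>{1..d}. sigma t i \<le> sstar i"
proof (intro allI ballI)
  fix t i assume i: "i \<in> {1..d}"
  let ?p = "2 - 2 / real N"
  have p0: "0 \<le> ?p" using N by (simp add: field_simps)
  have si: "sstar i \<le> sstar 1" using i max1 by (simp add: Max_ge)
  have s1: "sstar 1 > 0" using pos d by auto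
  have "eta * sstar i powr ?p \<le> eta * sstar 1 powr ?p"
    using eta_pos si bspec[OF pos i] p0 by (intro mult_left_mono powr_mono2) auto
  also have "\<dots> \<le> (1 / sstar 1) powr ?p * sstar 1 powr ?p"
    using eta_le by (intro mult_right_mono) auto
  also have "\<dots> = 1" using s1 by (simp add: powr_divide)
  finally have ea: "eta * sstar i powr ?p \<le> 1" .
  have "0 \<le> sigma t i \<and> sigma t i \<le> sstar i"
  proof (induction t)
    case 0 thus ?case using init i by fastforce
  next
    case (Suc t)
    thus ?case using step[OF N _ _ _ eta_pos ea, of "sigma t i"] rec i pos by auto
  qed
  thus "sigma t i \<le> sstar i" by simp
qed

end
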